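(* Let $1<p<\infty$. Then for every complex-valued $u\in C_0^\infty(\mathbb{R}^N\setminus\{0\})$, $$\int_{\mathbb{R}^N}\left|\nabla u\cdot\frac{x}{|x|}\right|^p dx=\left(\frac{N-p}{p}\right)^p\int_{\mathbb{R}^N}\frac{|u|^p}{|x|^p}dx+\int_{\mathbb{R}^N}C_p\left(\nabla u\cdot\frac{x}{|x|},\;|x|^{-\frac{N-p}{p}}\nabla\!\left(\frac{u}{|x|^{-\frac{N-p}{p}}}\right)\cdot\frac{x}{|x|}\right)dx.$$
   Context: $\nabla$ is the Euclidean gradient, $a\cdot b=\sum_ia_ib_i$, $|\cdot|$ the Euclidean norm. For $1<p<\infty$ and $\xi,\eta\in\mathbb{C}$, $C_p(\xi,\eta):=|\xi|^p-|\xi-\eta|^p-p|\xi-\eta|^{p-2}\mathrm{Re}\big((\xi-\eta)\overline{\eta}\big)\ (\ge0)$. *)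

theory Defs
  imports "HOL-Analysis.Analysis"
begin

text \<open>C-infinity functions on the whole space: differentiable everywhere, and every
  directional derivative is again C-infinity (coinductively, i.e. derivatives of all orders exist).\<close>
coinductive smooth_fun :: "('a::euclidean_space \<Rightarrow> 'b::real_normed_vector) \<Rightarrow> bool" where
  "(\<And>x. f differentiable (at x)) \<Longrightarrow>
   (\<And>v. smooth_fun (\<lambda>x. frechet_derivative f (at x) v)) \<Longrightarrow> smooth_fun f"

definition Cc_inf_punctured :: "('a::euclidean_space \<Rightarrow> complex) \<Rightarrow> bool" where
  "Cc_inf_punctured u \<longleftrightarrow> smooth_fun u \<and> compact (closure {x. u x \<noteq> 0})
      \<and> 0 \<notin> closure {x. u x \<noteq> 0}"

definition Cp :: "real \<Rightarrow> complex \<Rightarrow> complex \<Rightarrow> real" where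
  "Cp p \<xi> \<eta> = norm \<xi> powr p - norm (\<xi> - \<eta>) powr p
      - p * norm (\<xi> - \<eta>) powr (p - 2) * Re ((\<xi> - \<eta>) * cnj \<eta>)"

end

theory Submission
  imports Defs
begin

lemma normpow_deriv:
  fixes z :: complex
  assumes p: "1 < p"
  shows "((\<lambda>z. norm z powr p) has_derivative (\<lambda>h. p * ((norm z powr (p-2) *\<^sub>R z) \<bullet> h))) (at z)"
proof (cases "z = 0")
  case False
  have "((\<lambda>z. norm z powr p) has_derivative
      (\<lambda>h. (norm z powr p) * (0 * ln (norm z) + (sgn z \<bullet> h) * p / norm z))) (at z)"
  proof (rule has_derivative_powr)
    show "(norm has_derivative (\<lambda>h. sgn z \<bullet> h)) (at z)"
      using has_derivative_norm[OF False] by (simp add: inner_commute[of _ "sgn z"])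
  qed (auto intro!: derivative_eq_intros simp: False)
  moreover have "(\<lambda>h. (norm z powr p) * (0 * ln (norm z) + (sgn z \<bullet> h) * p / norm z))
      = (\<lambda>h. p * ((norm z powr (p-2) *\<^sub>R z) \<bullet> h))"
  proof
    fix h
    have n: "norm z > 0" using False by simp
    have e: "norm z powr p = norm z powr (p-2) * (norm z * norm z)"
      using n by (simp add: powr_diff power2_eq_square)
    have "sgn z \<bullet> h = (z \<bullet> h) / norm z" by (simp add: sgn_div_norm divide_inverse_commute)
    then show "(norm z powr p) * (0 * ln (norm z) + (sgn z \<bullet> h) * p / norm z)
      = p * ((norm z powr (p-2) *\<^sub>R z) \<bullet> h)"
      using n unfolding e by (simp add: field_simps)
  qed
  ultimately show ?thesis by simp
next
  case True
  have lim: "((\<lambda>y::complex. norm y powr (p-1)) \<longlongrightarrow> 0) (at 0)"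
  proof -
    have "((\<lambda>y::complex. norm y powr (p-1)) \<longlongrightarrow> norm (0::complex) powr (p-1)) (at 0)"
      using p by (intro tendsto_intros tendsto_powr2) auto
    then show ?thesis by simp
  qed
  have "((\<lambda>y::complex. norm (norm y powr p - norm (0::complex) powr p - p * ((norm (0::complex) powr (p-2) *\<^sub>R 0) \<bullet> (y - 0))) / norm (y - 0))
      \<longlongrightarrow> 0) (at 0)"
  proof -
    have "\<forall>\<^sub>F y in at 0. norm y powr (p-1) = norm (norm y powr p - norm (0::complex) powr p - p * ((norm (0::complex) powr (p-2) *\<^sub>R 0) \<bullet> (y - 0))) / norm (y - 0)"
      unfolding eventually_at_filter
      by (auto simp: powr_diff power2_eq_square)
    from Lim_transform_eventually[OF lim this] show ?thesis .
  qed
  then show ?thesis using True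
    by (simp add: has_derivative_iff_norm bounded_linear_mult_right bounded_linear_inner_right)
qed

definition psi :: "real \<Rightarrow> complex \<Rightarrow> complex" where
  "psi p z = norm z powr (p-2) *\<^sub>R z"

lemma norm_psi: "norm (psi p z) = norm z powr (p-1)"
  by (cases "z = 0") (auto simp: psi_def powr_diff power2_eq_square)

lemma continuous_psi:
  assumes p: "1 < p"
  shows "continuous_on UNIV (psi p)"
proof -
  have "isCont (psi p) z" for z
  proof (cases "z = 0")
    case False
    then show ?thesis unfolding psi_def
      by (intro continuous_intros) auto
  next
    case True
    have "((\<lambda>y. norm (psi p y)) \<longlongrightarrow> 0) (at 0)"
    proof -
      have "((\<lambda>y::complex. norm y powr (p-1)) \<longlongrightarrow> norm (0::complex) powr (p-1)) (at 0)"
        using p by (intro tendsto_intros tendsto_powr2) auto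
      then show ?thesis by (simp add: norm_psi)
    qed
    then have "(psi p \<longlongrightarrow> 0) (at 0)" by (rule tendsto_norm_zero_cancel)
    then show ?thesis using True by (simp add: isCont_def psi_def)
  qed
  then show ?thesis by (simp add: continuous_on_eq_continuous_at)
qed

lemma smooth_diff:
  assumes "smooth_fun f"
  shows "(f has_derivative frechet_derivative f (at x)) (at x)"
  using assms by (cases rule: smooth_fun.cases) (auto simp: frechet_derivative_works)

lemma smooth_cont_dir:
  assumes "smooth_fun f"
  shows "continuous_on UNIV (\<lambda>x. frechet_derivative f (at x) v)"
proof -
  have "smooth_fun (\<lambda>x. frechet_derivative f (at x) v)"
    using assms by (cases rule: smooth_fun.cases) auto
  then have "\<And>x. (\<lambda>x. frechet_derivative f (at x) v) differentiable (at x)"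
    by (cases rule: smooth_fun.cases) auto
  then show ?thesis
    by (simp add: continuous_on_eq_continuous_at differentiable_imp_continuous_within)
qed

lemma smooth_repr:
  fixes f :: "'a::euclidean_space \<Rightarrow> 'b::real_normed_vector"
  assumes "smooth_fun f"
  shows "frechet_derivative f (at x) w = (\<Sum>b\<in>Basis. (w \<bullet> b) *\<^sub>R frechet_derivative f (at x) b)"
proof -
  have lin: "linear (frechet_derivative f (at x))"
    using smooth_diff[OF assms] has_derivative_bounded_linear bounded_linear.linear by blast
  have "frechet_derivative f (at x) w = frechet_derivative f (at x) (\<Sum>b\<in>Basis. (w \<bullet> b) *\<^sub>R b)"
    by (simp add: euclidean_representation)
  also have "\<dots> = (\<Sum>b\<in>Basis. (w \<bullet> b) *\<^sub>R frechet_derivative f (at x) b)"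
    by (simp add: linear_sum[OF lin] linear_scale[OF lin] o_def)
  finally show ?thesis .
qed

lemma smooth_cont_joint:
  fixes f :: "'a::euclidean_space \<Rightarrow> 'b::real_normed_vector"
  assumes "smooth_fun f" "continuous_on S g" "continuous_on S h"
  shows "continuous_on S (\<lambda>t. frechet_derivative f (at (g t)) (h t))"
proof -
  have c: "continuous_on S (\<lambda>t. frechet_derivative f (at (g t)) b)" for b
    by (rule continuous_on_compose2[OF smooth_cont_dir[OF assms(1), of b] assms(2)]) simp
  have e: "(\<lambda>t. frechet_derivative f (at (g t)) (h t)) = (\<lambda>t. \<Sum>b\<in>Basis. (h t \<bullet> b) *\<^sub>R frechet_derivative f (at (g t)) b)"
    by (rule ext) (rule smooth_repr[OF assms(1)])
  show ?thesis
    unfolding e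
    apply (rule continuous_on_sum)
    apply (rule continuous_on_scaleR)
     apply (rule continuous_on_inner[OF assms(3) continuous_on_const])
    apply (rule c)
    done
qed

lemma outside_support:
  fixes f :: "'a::euclidean_space \<Rightarrow> 'b::real_normed_vector"
  assumes "x \<notin> closure {x. f x \<noteq> 0}"
  shows "f x = 0" "frechet_derivative f (at x) = (\<lambda>h. 0)"
proof -
  let ?S = "closure {x. f x \<noteq> 0}"
  have z: "f y = 0" if "y \<notin> ?S" for y
  proof (rule ccontr)
    assume "f y \<noteq> 0"
    then have "y \<in> {x. f x \<noteq> 0}" by simp
    then have "y \<in> ?S" by (rule subsetD[OF closure_subset])
    with that show False by contradiction
  qed
  show "f x = 0" by (rule z[OF assms])
  have "((\<lambda>x. 0) has_derivative (\<lambda>h. 0)) (at x)" by (rule has_derivative_const)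
  then have "((\<lambda>x. 0) has_derivative (\<lambda>h. 0)) (at x within UNIV)" by simp
  then have fd: "(f has_derivative (\<lambda>h. 0)) (at x within UNIV)"
  proof (rule has_derivative_transform_within_open[of _ _ _ _ "- ?S"])
    show "open (- ?S)" by (simp add: open_Compl)
    show "x \<in> - ?S" using assms by simp
    fix y assume "y \<in> - ?S"
    then have "y \<notin> ?S" by (rule ComplD)
    then show "0 = f y" using z by metis
  qed
  show "frechet_derivative f (at x) = (\<lambda>h. 0)"
    using frechet_derivative_at[OF fd] by (rule sym)
qed

lemma cs_integrable:
  fixes f :: "'a::euclidean_space \<Rightarrow> real"
  assumes "continuous_on UNIV f" "compact K" "\<And>x. x \<notin> K \<Longrightarrow> f x = 0"
  shows "integrable lborel f" "(\<integral>x. f x \<partial>lborel) = integral K f" "integral UNIV f = integral K f"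
proof -
  have e: "f = (\<lambda>x. indicator K x *\<^sub>R f x)"
    using assms(3) by (auto simp: indicator_def fun_eq_iff)
  show i: "integrable lborel f"
    by (subst e) (rule borel_integrable_compact[OF assms(2) continuous_on_subset[OF assms(1)]], simp)
  have e2: "f = (\<lambda>x. if x \<in> K then f x else 0)"
    using assms(3) by (auto simp: fun_eq_iff)
  show u: "integral UNIV f = integral K f"
    by (subst e2) (simp only: integral_restrict_UNIV)
  show "(\<integral>x. f x \<partial>lborel) = integral K f"
    using integral_lborel[OF i] u by simp
qed

lemma powr_sq: "0 \<le> (x::real) \<Longrightarrow> x powr (p - 2) * x\<^sup>2 = x powr p"
  by (cases "x = 0") (auto simp: powr_diff power2_eq_square)

lemma in_box: 
  fixes x :: "'a::euclidean_space"
  assumes "norm x \<le> B"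
  shows "x \<in> cbox (-B *\<^sub>R One) (B *\<^sub>R One)"
  unfolding mem_box
proof (intro ballI conjI)
  fix i :: 'a assume i: "i \<in> Basis"
  have xi: "\<bar>x \<bullet> i\<bar> \<le> B" using Basis_le_norm[OF i, of x] assms by linarith
  have One: "One \<bullet> i = (1::real)" using i by (simp add: inner_sum_left sum.If_cases inner_Basis)
  moreover have "(- B *\<^sub>R One) \<bullet> i = - B" "(B *\<^sub>R One) \<bullet> i = B" using One by simp_all
  ultimately show "(- B *\<^sub>R One) \<bullet> i \<le> x \<bullet> i" "x \<bullet> i \<le> (B *\<^sub>R One) \<bullet> i" using xi by auto
qed

lemma Cp_alg:
  fixes \<zeta> w :: complex
  assumes r: "r > 0" and p: "1 < p"
  shows "Cp p \<zeta> (\<zeta> + complex_of_real (a/r) * w) = norm \<zeta> powr p + (p-1) * \<bar>a\<bar> powr p * (norm w powr p / r powr p)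
     + a * \<bar>a\<bar> powr (p-2) * (p * (psi p w \<bullet> (r *\<^sub>R \<zeta>)) / r powr p)"
proof -
  define A where "A = \<bar>a\<bar>"
  define W where "W = norm w"
  define I where "I = w \<bullet> \<zeta>"
  have A0: "A \<ge> 0" and W0: "W \<ge> 0" by (auto simp: A_def W_def)
  have nm: "norm (\<zeta> - (\<zeta> + complex_of_real (a/r) * w)) = A / r * W"
    using r by (simp add: A_def W_def norm_mult norm_divide)
  have re: "Re ((\<zeta> - (\<zeta> + complex_of_real (a/r) * w)) * cnj (\<zeta> + complex_of_real (a/r) * w))
      = - (a/r) * I - (a/r)^2 * W^2"
  proof -
    have wsq: "norm w * norm w = Re w * Re w + Im w * Im w" using cmod_power2[of w] by (simp add: power2_eq_square)
    show ?thesis using r by (simp add: I_def W_def inner_complex_def wsq field_simps power2_eq_square)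
  qed
  have ps: "psi p w \<bullet> (r *\<^sub>R \<zeta>) = r * W powr (p-2) * I"
    by (simp add: psi_def I_def W_def)
  have e1: "(A / r * W) powr p = A powr p * W powr p / r powr p"
    using A0 W0 r by (simp add: powr_mult powr_divide)
  have e2: "(A / r * W) powr (p-2) = A powr (p-2) * W powr (p-2) / r powr (p-2)"
    using A0 W0 r by (simp add: powr_mult powr_divide)
  have fA: "A powr p = A powr (p-2) * A^2" using powr_sq[OF A0] by simp
  have fW: "W powr p = W powr (p-2) * W^2" using powr_sq[OF W0] by simp
  have fr: "r powr p = r powr (p-2) * r^2" using powr_sq[of r p] r by simp
  have a2: "a^2 = A^2" by (simp add: A_def)
  have rp: "r powr (p-2) > 0" using r by simp
  show ?thesis
    unfolding Cp_def nm re ps e1 e2 A_def[symmetric] W_def[symmetric]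
    unfolding fA fW fr
    using r rp by (simp add: field_simps power2_eq_square a2[unfolded power2_eq_square])
qed

theorem corollary4p1:
  fixes p :: real and u :: "real ^ 'n \<Rightarrow> complex"
  assumes "1 < p" and "Cc_inf_punctured u"
  shows "(\<integral>x. norm (frechet_derivative u (at x) (x /\<^sub>R norm x)) powr p \<partial>lborel)
       = \<bar>(real CARD('n) - p) / p\<bar> powr p * (\<integral>x. norm (u x) powr p / norm x powr p \<partial>lborel)
         + (\<integral>x. Cp p (frechet_derivative u (at x) (x /\<^sub>R norm x))
              (complex_of_real (norm x powr (- ((real CARD('n) - p) / p)))
                * frechet_derivative (\<lambda>y. complex_of_real (norm y powr ((real CARD('n) - p) / p)) * u y)
                    (at x) (x /\<^sub>R norm x)) \<partial>lborel)"
proof -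
  have p: "1 < p" by fact
  have sm: "smooth_fun u" and cS: "compact (closure {x. u x \<noteq> 0})" and S0: "0 \<notin> closure {x. u x \<noteq> 0}"
    using assms(2) by (auto simp: Cc_inf_punctured_def)
  define S where "S = closure {x. u x \<noteq> 0}"
  define N where "N = real CARD('n)"
  define a where "a = (N - p) / p"
  define d where "d = (\<lambda>x. frechet_derivative u (at x))"
  have ud: "(u has_derivative d x) (at x)" for x unfolding d_def by (rule smooth_diff[OF sm])
  have ucont: "continuous_on UNIV u"
    using ud by (meson continuous_at_imp_continuous_on has_derivative_continuous)
  have out: "u x = 0" "d x = (\<lambda>h. 0)" if "x \<notin> S" for x
    using outside_support[of x u] that by (auto simp: S_def d_def)
  obtain \<delta> where dpos: "\<delta> > 0" and dS: "\<And>x. x \<in> S \<Longrightarrow> \<delta> \<le> norm x"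
  proof -
    have "open (- S)" unfolding S_def by auto
    then obtain e where "e > 0" "ball 0 e \<subseteq> - S"
      using S0 unfolding S_def by (meson ComplI open_contains_ball)
    then show ?thesis by (metis that ComplD mem_ball_0 not_le subsetD)
  qed
  obtain R where Rpos: "R > 0" and RS: "\<And>x. x \<in> S \<Longrightarrow> norm x \<le> R"
    using compact_imp_bounded[OF cS] unfolding S_def bounded_pos by blast
  define K where "K = cbox (-(2*R) *\<^sub>R One) ((2*R) *\<^sub>R One :: real^'n)"
  have cK: "compact K" unfolding K_def by simp
  have SK: "x \<in> K" if "x \<in> S" for x
    unfolding K_def by (rule in_box) (use RS[OF that] Rpos in auto)
  define \<rho> where "\<rho> = (\<lambda>x::real^'n. max (norm x) (\<delta>/2))"
  have \<rho>pos: "\<rho> x > 0" for x using dpos by (auto simp: \<rho>_def)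
  have \<rho>cont: "continuous_on UNIV \<rho>" unfolding \<rho>_def by (intro continuous_intros)
  have \<rho>S: "\<rho> x = norm x" if "x \<in> S" for x using dS[OF that] dpos by (auto simp: \<rho>_def)
  define \<xi> where "\<xi> = (\<lambda>x. d x (x /\<^sub>R norm x))"
  define g where "g = (\<lambda>x. norm (u x) powr p / norm x powr p)"
  define q where "q = (\<lambda>x. p * (psi p (u x) \<bullet> d x x))"
  define Pf where "Pf = (\<lambda>y. complex_of_real (norm y powr a) * u y)"
  define \<eta> where "\<eta> = (\<lambda>x. complex_of_real (norm x powr (- a)) * frechet_derivative Pf (at x) (x /\<^sub>R norm x))"
  have P: "Cp p (\<xi> x) (\<eta> x) = norm (\<xi> x) powr p + (p - 1) * \<bar>a\<bar> powr p * g x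
            + a * \<bar>a\<bar> powr (p - 2) * (q x / norm x powr p)" for x
  proof (cases "x \<in> S")
    case False
    have "closure {y. Pf y \<noteq> 0} \<subseteq> S"
      unfolding S_def by (rule closure_mono) (auto simp: Pf_def)
    then have "frechet_derivative Pf (at x) = (\<lambda>h. 0)"
      using outside_support(2)[of x Pf] False by auto
    then show ?thesis using False out[OF False] p
      by (simp add: \<xi>_def \<eta>_def g_def q_def psi_def Cp_def)
  next
    case True
    define r where "r = norm x"
    have r: "r > 0" using dS[OF True] dpos unfolding r_def by linarith
    have x0: "x \<noteq> 0" using r by (auto simp: r_def)
    have h1: "((\<lambda>y. norm y powr a) has_derivative (\<lambda>h. norm x powr a * (0 * ln (norm x) + (sgn x \<bullet> h) * a / norm x))) (at x)"
    proof (rule has_derivative_powr)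
      show "(norm has_derivative (\<lambda>h. sgn x \<bullet> h)) (at x)"
        using has_derivative_norm[OF x0] by (simp add: inner_commute[of _ "sgn x"])
    qed (use x0 in \<open>auto intro!: derivative_eq_intros\<close>)
    note h2 = bounded_linear.has_derivative[OF bounded_linear_of_real h1]
    have h3: "(Pf has_derivative (\<lambda>h. complex_of_real (norm x powr a) * d x h
        + complex_of_real (norm x powr a * (0 * ln (norm x) + (sgn x \<bullet> h) * a / norm x)) * u x)) (at x)"
      unfolding Pf_def using has_derivative_mult[OF h2 ud[of x]] by simp
    have sg: "sgn x \<bullet> (x /\<^sub>R norm x) = 1"
      using x0 by (simp add: sgn_div_norm dot_square_norm power2_eq_square)
    have eta: "\<eta> x = \<xi> x + complex_of_real (a / r) * u x"
    proof -
      have "\<eta> x = complex_of_real (r powr - a) * (complex_of_real (r powr a) * \<xi> x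
          + complex_of_real (r powr a * (a / r)) * u x)"
        unfolding \<eta>_def frechet_derivative_at[OF h3, symmetric] \<xi>_def sg r_def by simp
      also have "\<dots> = \<xi> x + complex_of_real (a / r) * u x"
        using r by (simp add: powr_minus field_simps)
      finally show ?thesis .
    qed
    have lin: "linear (d x)" using ud[of x] has_derivative_bounded_linear bounded_linear.linear by blast
    have dxx: "d x x = r *\<^sub>R \<xi> x"
    proof -
      have "\<xi> x = (1 / r) *\<^sub>R d x x"
        unfolding \<xi>_def r_def by (simp add: linear_scale[OF lin] divide_inverse_commute)
      then show ?thesis using r by simp
    qed
    show ?thesis
      unfolding eta q_def dxx g_def r_def[symmetric]
      by (rule Cp_alg[OF r p])
  qed
  have uS: "x \<in> S" if "u x \<noteq> 0" for x
  proof -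
    have "x \<in> {x. u x \<noteq> 0}" using that by simp
    then show ?thesis unfolding S_def by (rule subsetD[OF closure_subset])
  qed
  have notK: "x \<notin> S" if "x \<notin> K" for x using SK that by metis
  have \<xi>eq: "\<xi> x = d x (x /\<^sub>R \<rho> x)" for x
  proof (cases "x \<in> S")
    case True then show ?thesis by (simp add: \<xi>_def \<rho>S)
  next
    case False then show ?thesis by (simp add: \<xi>_def out(2)[OF False])
  qed
  have c\<xi>: "continuous_on UNIV \<xi>"
  proof -
    have ch: "continuous_on UNIV (\<lambda>x::real^'n. x /\<^sub>R \<rho> x)"
      using \<rho>pos by (intro continuous_intros \<rho>cont) (metis less_irrefl)
    have "continuous_on UNIV (\<lambda>x. frechet_derivative u (at x) (x /\<^sub>R \<rho> x))"
      by (rule smooth_cont_joint[OF sm continuous_on_id ch])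
    moreover have "\<xi> = (\<lambda>x. frechet_derivative u (at x) (x /\<^sub>R \<rho> x))"
      using \<xi>eq by (auto simp: d_def fun_eq_iff)
    ultimately show ?thesis by simp
  qed
  have int\<xi>: "integrable lborel (\<lambda>x. norm (\<xi> x) powr p)"
  proof (rule cs_integrable(1)[OF _ cK])
    show "continuous_on UNIV (\<lambda>x. norm (\<xi> x) powr p)"
      using p by (intro continuous_on_powr' continuous_on_norm c\<xi> continuous_on_const) auto
    show "norm (\<xi> x) powr p = 0" if "x \<notin> K" for x
      using out(2)[OF notK[OF that]] by (simp add: \<xi>_def)
  qed
  have geq: "g x = norm (u x) powr p / \<rho> x powr p" for x
  proof (cases "u x = 0")
    case True then show ?thesis using p by (simp add: g_def)
  next
    case False then show ?thesis by (simp add: g_def \<rho>S[OF uS[OF False]])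
  qed
  have vcont: "continuous_on UNIV (\<lambda>x. norm (u x) powr p)"
    using p by (intro continuous_on_powr' continuous_on_norm ucont continuous_on_const) auto
  have cg: "continuous_on UNIV g"
  proof -
    have \<rho>ne: "\<forall>x\<in>UNIV. \<rho> x \<noteq> 0" using \<rho>pos by (metis less_irrefl)
    have c1: "continuous_on UNIV (\<lambda>x. \<rho> x powr p)"
      by (rule continuous_on_powr[OF \<rho>cont continuous_on_const \<rho>ne])
    have "\<forall>x\<in>UNIV. \<rho> x powr p \<noteq> 0" using \<rho>ne by simp
    then have "continuous_on UNIV (\<lambda>x. norm (u x) powr p / \<rho> x powr p)"
      by (rule continuous_on_divide[OF vcont c1])
    moreover have "g = (\<lambda>x. norm (u x) powr p / \<rho> x powr p)" using geq by (rule ext)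
    ultimately show ?thesis by simp
  qed
  have g0: "g x = 0" if "x \<notin> K" for x
    using out(1)[OF notK[OF that]] p by (simp add: g_def)
  have intg: "integrable lborel g" and Gint: "integral UNIV g = (\<integral>x. g x \<partial>lborel)"
    using cs_integrable[OF cg cK g0] by auto
  have intq: "integrable lborel (\<lambda>x. q x / norm x powr p)"
    and L: "(\<integral>x. q x / norm x powr p \<partial>lborel) = (p - N) * (\<integral>x. g x \<partial>lborel)"
  proof -
    define G where "G = integral UNIV g"
    define U where "U = {1/2..2::real}"
    define h where "h = (\<lambda>t x. norm (u (t *\<^sub>R x)) powr p / \<rho> x powr p)"
    define hd where "hd = (\<lambda>t x. p * (psi p (u (t *\<^sub>R x)) \<bullet> d (t *\<^sub>R x) x) / \<rho> x powr p)"
    define F where "F = (\<lambda>t. integral K (h t))"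
    have \<rho>ne: "\<forall>x\<in>UNIV. \<rho> x \<noteq> 0" using \<rho>pos by (metis less_irrefl)
    have c1: "continuous_on UNIV (\<lambda>x. \<rho> x powr p)"
      by (rule continuous_on_powr[OF \<rho>cont continuous_on_const \<rho>ne])
    have \<rho>pne: "\<forall>x\<in>A. \<rho> x powr p \<noteq> 0" for A using \<rho>ne by simp
    have vd: "((\<lambda>y. norm (u y) powr p) has_derivative (\<lambda>w. p * (psi p (u y) \<bullet> d y w))) (at y)" for y
      using has_derivative_compose[OF ud[of y] normpow_deriv[OF p, of "u y"]] by (simp add: psi_def)
    have lin: "linear (d y)" for y using ud[of y] has_derivative_bounded_linear bounded_linear.linear by blast
    have hder: "((\<lambda>t. h t x) has_field_derivative hd t x) (at t within U)" for t x
    proof -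
      have sd: "((\<lambda>t. t *\<^sub>R x) has_derivative (\<lambda>s. s *\<^sub>R x)) (at t within U)"
        by (intro derivative_eq_intros) auto
      have "((\<lambda>t. norm (u (t *\<^sub>R x)) powr p) has_derivative (\<lambda>s. p * (psi p (u (t *\<^sub>R x)) \<bullet> d (t *\<^sub>R x) (s *\<^sub>R x)))) (at t within U)"
        using has_derivative_compose[OF sd vd] by simp
      moreover have "(\<lambda>s. p * (psi p (u (t *\<^sub>R x)) \<bullet> d (t *\<^sub>R x) (s *\<^sub>R x)))
          = (*) (p * (psi p (u (t *\<^sub>R x)) \<bullet> d (t *\<^sub>R x) x))"
        by (rule ext) (simp add: linear_scale[OF lin] algebra_simps)
      ultimately have "((\<lambda>t. norm (u (t *\<^sub>R x)) powr p) has_field_derivative (p * (psi p (u (t *\<^sub>R x)) \<bullet> d (t *\<^sub>R x) x))) (at t within U)"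
        by (simp add: has_field_derivative_def)
      from DERIV_cdivide[OF this, of "\<rho> x powr p"] show ?thesis by (simp add: h_def hd_def)
    qed
    have hint: "h t integrable_on K" for t
    proof -
      have "continuous_on UNIV (\<lambda>x. norm (u (t *\<^sub>R x)) powr p)"
        by (rule continuous_on_compose2[OF vcont, of _ "\<lambda>x. t *\<^sub>R x"]) (auto intro!: continuous_intros)
      then have "continuous_on UNIV (h t)"
        unfolding h_def by (rule continuous_on_divide[OF _ c1 \<rho>pne])
      then show ?thesis unfolding K_def by (rule integrable_continuous[OF continuous_on_subset]) simp
    qed
    have hdcont: "continuous_on (U \<times> K) (\<lambda>(t, x). hd t x)"
    proof -
      have cm: "continuous_on (U \<times> K) (\<lambda>z. fst z *\<^sub>R snd z)"
        by (intro continuous_intros)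
      have cd: "continuous_on (U \<times> K) (\<lambda>z. frechet_derivative u (at (fst z *\<^sub>R snd z)) (snd z))"
        by (rule smooth_cont_joint[OF sm cm continuous_on_snd[OF continuous_on_id]])
      have cpsi: "continuous_on (U \<times> K) (\<lambda>z. psi p (u (fst z *\<^sub>R snd z)))"
      proof -
        have "continuous_on (U \<times> K) (\<lambda>z. u (fst z *\<^sub>R snd z))"
          by (rule continuous_on_compose2[OF ucont cm]) simp
        then show ?thesis by (rule continuous_on_compose2[OF continuous_psi[OF p]]) simp
      qed
      have crho: "continuous_on (U \<times> K) (\<lambda>z. \<rho> (snd z) powr p)"
        by (rule continuous_on_compose2[OF c1 continuous_on_snd[OF continuous_on_id]]) auto
      have "continuous_on (U \<times> K) (\<lambda>z. p * (psi p (u (fst z *\<^sub>R snd z)) \<bullet> frechet_derivative u (at (fst z *\<^sub>R snd z)) (snd z)) / \<rho> (snd z) powr p)"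
        by (rule continuous_on_divide[OF continuous_on_mult[OF continuous_on_const continuous_on_inner[OF cpsi cd]] crho])
           (use \<rho>ne in simp)
      then show ?thesis by (simp add: hd_def d_def case_prod_beta)
    qed
    have Fder: "(F has_field_derivative integral K (hd 1)) (at 1 within U)"
      unfolding F_def K_def
      by (rule leibniz_rule_field_derivative[OF hder hint[unfolded K_def] hdcont[unfolded K_def]])
         (auto simp: U_def)
    have "interior U = {1/2<..<2}" by (simp add: U_def)
    then have "at 1 within U = at (1::real)" by (intro at_within_interior) simp
    then have Fder': "(F has_field_derivative integral K (hd 1)) (at 1)" using Fder by simp
    have FG: "F t = t powr (p - N) * G" if t: "t \<in> {1/2<..<2}" for t
    proof -
      have tpos: "t > 0" and t2: "t < 2" and t1: "t > 1/2" using t by auto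
      have hx: "h t x = t powr p * g (t *\<^sub>R x)" for x
      proof (cases "u (t *\<^sub>R x) = 0")
        case True then show ?thesis using p by (simp add: h_def g_def)
      next
        case False
        have "\<delta> \<le> norm (t *\<^sub>R x)" by (rule dS[OF uS[OF False]])
        also have "\<dots> = t * norm x" using tpos by simp
        also have "\<dots> \<le> 2 * norm x" using t2 by (intro mult_right_mono) auto
        finally have "\<rho> x = norm x" unfolding \<rho>_def by simp
        moreover have "norm (t *\<^sub>R x) powr p = t powr p * norm x powr p"
          using tpos by (simp add: powr_mult)
        moreover have "t powr p > 0" using tpos by simp
        ultimately show ?thesis by (simp add: h_def g_def field_simps)
      qed
      have Ft: "F t = t powr p * integral K (\<lambda>x. g (t *\<^sub>R x))"
      proof -
        have "h t = (\<lambda>x. t powr p * g (t *\<^sub>R x))" using hx by (rule ext)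
        then show ?thesis unfolding F_def by simp
      qed
      define C where "C = cbox (-(2*R*t) *\<^sub>R One) ((2*R*t) *\<^sub>R One :: real^'n)"
      have gU: "(g has_integral G) UNIV" unfolding G_def
        by (rule integrable_integral[OF integrable_on_lborel[OF intg]])
      have gr: "(\<lambda>x. if x \<in> C then g x else 0) = g"
      proof (rule ext)
        fix x
        show "(if x \<in> C then g x else 0) = g x"
        proof (cases "u x = 0")
          case True then show ?thesis using p by (simp add: g_def)
        next
          case False
          have "norm x \<le> R" by (rule RS[OF uS[OF False]])
          also have "R \<le> 2 * R * t" using t1 Rpos by (simp add: field_simps)
          finally have "x \<in> C" unfolding C_def by (rule in_box)
          then show ?thesis by simp
        qed
      qed
      have gC: "(g has_integral G) C"
      proof -
        from gU have "((\<lambda>x. if x \<in> C then g x else 0) has_integral G) UNIV" by (simp only: gr)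
        then show ?thesis by (simp only: has_integral_restrict_UNIV)
      qed
      have e1: "((-(2*R*t)) *\<^sub>R One - 0) /\<^sub>R t = (-(2*R)) *\<^sub>R (One::real^'n)"
        using tpos by simp
      have e2: "(((2*R*t)) *\<^sub>R One - 0) /\<^sub>R t = ((2*R)) *\<^sub>R (One::real^'n)"
        using tpos by simp
      have "((\<lambda>x. g (t *\<^sub>R x + 0)) has_integral (G /\<^sub>R t ^ DIM(real^'n)))
          (cbox ((-(2*R*t) *\<^sub>R One - 0) /\<^sub>R t) (((2*R*t) *\<^sub>R One - 0) /\<^sub>R t))"
        using has_integral_affinity_iff[OF tpos, where f=g and I=G and c=0 and a="-(2*R*t) *\<^sub>R One" and b="(2*R*t) *\<^sub>R One"] gC
        unfolding C_def by simp
      then have "((\<lambda>x. g (t *\<^sub>R x)) has_integral (G / t ^ CARD('n))) K"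
        unfolding e1 e2 K_def by (simp add: divide_inverse_commute)
      then have "integral K (\<lambda>x. g (t *\<^sub>R x)) = G / t ^ CARD('n)" by (rule integral_unique)
      moreover have "t ^ CARD('n) = t powr N" unfolding N_def using tpos by (simp add: powr_realpow)
      ultimately show ?thesis unfolding Ft using tpos by (simp add: powr_diff)
    qed
    have RD: "((\<lambda>t. t powr (p - N) * G) has_field_derivative ((p - N) * 1 powr (p - N - 1)) * G) (at 1)"
      by (rule DERIV_cmult_right[OF has_real_derivative_powr]) simp
    have RD2: "((\<lambda>t. t powr (p - N) * G) has_field_derivative integral K (hd 1)) (at 1)"
      by (rule has_field_derivative_transform_within_open[OF Fder', of "{1/2<..<2}"]) (auto simp: FG)
    have IK: "integral K (hd 1) = (p - N) * G"
      using DERIV_unique[OF RD2 RD] by simp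
    have hd1: "hd 1 = (\<lambda>x. q x / norm x powr p)"
    proof (rule ext)
      fix x
      show "hd 1 x = q x / norm x powr p"
      proof (cases "u x = 0")
        case True then show ?thesis by (simp add: hd_def q_def psi_def)
      next
        case False then show ?thesis by (simp add: hd_def q_def \<rho>S[OF uS[OF False]])
      qed
    qed
    have cq: "continuous_on UNIV (hd 1)"
    proof -
      have cd: "continuous_on UNIV (\<lambda>x. frechet_derivative u (at x) x)"
        by (rule smooth_cont_joint[OF sm continuous_on_id continuous_on_id])
      have cpsi: "continuous_on UNIV (\<lambda>x. psi p (u x))"
        by (rule continuous_on_compose2[OF continuous_psi[OF p] ucont]) simp
      have "continuous_on UNIV (\<lambda>x. p * (psi p (u x) \<bullet> frechet_derivative u (at x) x) / \<rho> x powr p)"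
        by (rule continuous_on_divide[OF continuous_on_mult[OF continuous_on_const continuous_on_inner[OF cpsi cd]] c1])
           (use \<rho>ne in simp)
      then show ?thesis by (simp add: hd_def d_def)
    qed
    have q0: "hd 1 x = 0" if "x \<notin> K" for x
      using out(1)[OF notK[OF that]] by (simp add: hd_def psi_def)
    note CI = cs_integrable[OF cq cK q0]
    show "integrable lborel (\<lambda>x. q x / norm x powr p)" using CI(1) unfolding hd1 .
    show "(\<integral>x. q x / norm x powr p \<partial>lborel) = (p - N) * (\<integral>x. g x \<partial>lborel)"
      using CI(2) IK Gint unfolding hd1 G_def by simp
  qed
  have "(\<integral>x. Cp p (\<xi> x) (\<eta> x) \<partial>lborel) = (\<integral>x. norm (\<xi> x) powr p \<partial>lborel)
        + (p - 1) * \<bar>a\<bar> powr p * (\<integral>x. g x \<partial>lborel) + a * \<bar>a\<bar> powr (p - 2) * (\<integral>x. q x / norm x powr p \<partial>lborel)"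
  proof -
    have i2: "integrable lborel (\<lambda>x. (p - 1) * \<bar>a\<bar> powr p * g x)"
      using intg by (rule integrable_mult_right)
    have i3: "integrable lborel (\<lambda>x. a * \<bar>a\<bar> powr (p - 2) * (q x / norm x powr p))"
      using intq by (rule integrable_mult_right)
    have i12: "integrable lborel (\<lambda>x. norm (\<xi> x) powr p + (p - 1) * \<bar>a\<bar> powr p * g x)"
      using int\<xi> i2 by (rule Bochner_Integration.integrable_add)
    show ?thesis
      unfolding P
      by (simp only: Bochner_Integration.integral_add[OF i12 i3] Bochner_Integration.integral_add[OF int\<xi> i2]
          Bochner_Integration.integral_mult_right_zero)
  qed
  also have "\<dots> = (\<integral>x. norm (\<xi> x) powr p \<partial>lborel) - \<bar>a\<bar> powr p * (\<integral>x. g x \<partial>lborel)"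
  proof -
    have "a * \<bar>a\<bar> powr (p - 2) * (p - N) = - p * \<bar>a\<bar> powr p"
    proof -
      have pN: "p - N = - p * a" using p by (simp add: a_def field_simps)
      have e: "a * a * \<bar>a\<bar> powr (p-2) = \<bar>a\<bar> powr p"
        using powr_sq[of "\<bar>a\<bar>" p] by (simp add: power2_eq_square mult.commute)
      have "a * \<bar>a\<bar> powr (p - 2) * (p - N) = - p * (a * a * \<bar>a\<bar> powr (p-2))"
        unfolding pN by (simp add: algebra_simps)
      also have "\<dots> = - p * \<bar>a\<bar> powr p" unfolding e ..
      finally show ?thesis .
    qed
    then have H: "a * \<bar>a\<bar> powr (p - 2) * ((p - N) * (\<integral>x. g x \<partial>lborel)) = - p * \<bar>a\<bar> powr p * (\<integral>x. g x \<partial>lborel)"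
      by (metis mult.assoc)
    have H2: "(p - 1) * \<bar>a\<bar> powr p * (\<integral>x. g x \<partial>lborel) = p * \<bar>a\<bar> powr p * (\<integral>x. g x \<partial>lborel) - \<bar>a\<bar> powr p * (\<integral>x. g x \<partial>lborel)"
      by (simp add: algebra_simps)
    show ?thesis unfolding L using H H2 by linarith
  qed
  finally show ?thesis
    unfolding \<xi>_def \<eta>_def g_def Pf_def d_def a_def N_def by simp
qed

end
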